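(* Let $t_f>0$. Let $b$ be a box in an octree and let $c\in b$ be a QBX center with expansion radius $r_c>0$ that is suspended in $b$. Then the closed cube $\{x\in\mathbb R^3:|x-c|_\infty\le 4\sqrt3\,r_c/t_f\}$ contains the $2$-near neighborhood of $b$.
   Context: An octree is a rooted tree of axis-aligned closed cubes ("boxes") in $\mathbb R^3$. For a box $b$, $|b|$ denotes its $\ell^\infty$ radius (half side length) and $c_b$ its center. The $k$-near neighborhood of $b$ is the closed cube $\{x:|x-c_b|_\infty\le|b|(1+2k)\}$. For target confinement factor $t_f$, $\mathsf{TCR}(b)$ is the closed Euclidean ball of radius $\sqrt3|b|(1+t_f)$ centered at $c_b$. A center $c\in b$ with radius $r_c$ is suspended in $b$ if for every one of the eight cubes $b'$ of radius $|b|/2$ obtained by bisecting $b$ along each axis that contains $c$, the closed Euclidean ball $\{x:|x-c|_2\le r_c\}$ is not contained in $\mathsf{TCR}(b')$. *)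

theory Defs
  imports "HOL-Analysis.Analysis"
begin

definition box :: "real^3 \<Rightarrow> real \<Rightarrow> (real^3) set" where
  "box cb rb = {x. infnorm (x - cb) \<le> rb}"

definition near_nbhd :: "real^3 \<Rightarrow> real \<Rightarrow> real \<Rightarrow> (real^3) set" where
  "near_nbhd cb rb k = {x. infnorm (x - cb) \<le> rb * (1 + 2 * k)}"

definition TCR :: "real \<Rightarrow> real^3 \<Rightarrow> real \<Rightarrow> (real^3) set" where
  "TCR tf cb rb = cball cb (sqrt 3 * rb * (1 + tf))"

definition child_centers :: "real^3 \<Rightarrow> real \<Rightarrow> (real^3) set" where
  "child_centers cb rb = {cb + (rb / 2) *\<^sub>R s | s. \<forall>i. s $ i = 1 \<or> s $ i = -1}"

definition suspended :: "real \<Rightarrow> real^3 \<Rightarrow> real \<Rightarrow> real^3 \<Rightarrow> real \<Rightarrow> bool" where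
  "suspended tf cb rb c rc \<longleftrightarrow>
     c \<in> box cb rb \<and>
     (\<forall>cb' \<in> child_centers cb rb. c \<in> box cb' (rb / 2) \<longrightarrow>
        \<not> (cball c rc \<subseteq> TCR tf cb' (rb / 2)))"

end

theory Submission
  imports Defs
begin

lemma infnorm_le_cart:
  fixes x :: "real^'n"
  assumes "\<And>i. \<bar>x$i\<bar> \<le> e"
  shows "infnorm x \<le> e"
  unfolding infnorm_cart
  by (rule cSup_least) (use assms in auto)

theorem mainTheorem4:
  fixes tf rb rc :: real and cb c :: "real^3"
  assumes "tf > 0" and "rb > 0" and "rc > 0"
    and "c \<in> box cb rb"
    and "suspended tf cb rb c rc"
  shows "near_nbhd cb rb 2 \<subseteq> {x. infnorm (x - c) \<le> 4 * sqrt 3 * rc / tf}"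
proof -
  define s :: "real^3" where "s = (\<chi> i. if c$i \<ge> cb$i then 1 else -1)"
  define cb' where "cb' = cb + (rb / 2) *\<^sub>R s"
  have cc: "cb' \<in> child_centers cb rb"
    unfolding child_centers_def cb'_def by (rule CollectI, rule exI[of _ s]) (auto simp: s_def)
  have cin: "infnorm (c - cb) \<le> rb" using assms(4) unfolding box_def by simp
  have comp: "\<bar>(c - cb)$i\<bar> \<le> rb" for i
    using component_le_infnorm_cart[of "c - cb" i] cin by linarith
  have "\<bar>(c - cb')$i\<bar> \<le> rb/2" for i
    using comp[of i] unfolding cb'_def s_def by (auto simp: abs_if split: if_splits)
  hence ci': "infnorm (c - cb') \<le> rb/2" by (rule infnorm_le_cart)
  hence "c \<in> box cb' (rb/2)" unfolding box_def by simp
  with assms(5) cc have ns: "\<not> cball c rc \<subseteq> cball cb' (sqrt 3 * (rb/2) * (1 + tf))"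
    unfolding suspended_def TCR_def by blast
  have "norm (c - cb') \<le> sqrt 3 * infnorm (c - cb')"
    using norm_le_infnorm[of "c - cb'"] by simp
  also have "\<dots> \<le> sqrt 3 * (rb/2)" using ci' by (simp add: mult_left_mono)
  finally have d: "dist c cb' \<le> sqrt 3 * (rb/2)" by (simp add: dist_norm)
  have "rc + dist c cb' > sqrt 3 * (rb/2) * (1 + tf)"
  proof (rule ccontr)
    assume "\<not> ?thesis"
    hence "cball c rc \<subseteq> cball cb' (sqrt 3 * (rb/2) * (1 + tf))"
      using assms(3) by (simp add: cball_subset_cball_iff dist_commute)
    with ns show False by blast
  qed
  with d have "rc > sqrt 3 * (rb/2) * tf" by (simp add: algebra_simps)
  hence "sqrt 3 * (sqrt 3 * (rb/2) * tf) \<le> sqrt 3 * rc"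
    by (intro mult_left_mono) auto
  hence "3 * rb * tf \<le> 2 * sqrt 3 * rc"
    by (simp add: algebra_simps)
  hence "6 * rb * tf \<le> 4 * sqrt 3 * rc" by linarith
  hence key: "6 * rb \<le> 4 * sqrt 3 * rc / tf"
    using assms(1) by (simp add: pos_le_divide_eq)
  show ?thesis
  proof
    fix x assume "x \<in> near_nbhd cb rb 2"
    hence "infnorm (x - cb) \<le> 5 * rb" unfolding near_nbhd_def by simp
    moreover have "infnorm (x - c) \<le> infnorm (x - cb) + infnorm (cb - c)"
      using infnorm_triangle[of "x - cb" "cb - c"] by simp
    moreover have "infnorm (cb - c) \<le> rb" using cin by (simp add: infnorm_sub)
    ultimately show "x \<in> {x. infnorm (x - c) \<le> 4 * sqrt 3 * rc / tf}" using key by simp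
  qed
qed

end
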